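(* Let $\xi\in\mathbb{R}$, let $n\ge1$ be an integer, let $\delta>0$, and let $\mathcal{P}$ be a subset of $\mathbb{Z}[T]$ each of whose elements is either a polynomial of degree $n$ or a monic polynomial of degree $n+1$. Then the following conditions are equivalent: (i) There exists a constant $c_6>0$ such that $|P^{[k]}(\xi)| \le c_6 H(P)^{1-(n-k)\delta}$ for every $P\in\mathcal{P}$ and every $k=0,1,\dots,n$. (ii) There exists a constant $c_7>0$ such that for every $P\in\mathcal{P}$ there are $n$ roots $\alpha$ of $P$ (counted with multiplicity) each satisfying $|\xi-\alpha| \le c_7 H(P)^{-\delta}$.
   Context: The height $H(P)$ of a polynomial $P\in\mathbb{R}[T]$ is the largest absolute value of its coefficients. For $P \in \mathbb{R}[T]$ and $k\ge0$, $P^{[k]}(\xi) = P^{(k)}(\xi)/k!$ denotes the $k$-th divided derivative of $P$ at $\xi$ (the coefficient of $(T-\xi)^k$ in the Taylor expansion of $P$ at $\xi$). *)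

theory Defs
  imports "HOL-Analysis.Analysis" "HOL-Computational_Algebra.Computational_Algebra"
begin

definition height :: "int poly \<Rightarrow> real" where
  "height p = real_of_int (Max ((\<lambda>i. \<bar>coeff p i\<bar>) ` {..degree p}))"

definition div_deriv :: "real poly \<Rightarrow> nat \<Rightarrow> real \<Rightarrow> real" where
  "div_deriv p k x = poly ((pderiv ^^ k) p) x / fact k"

end

theory Submission
  imports Defs
begin

lemma higher_pderiv_pcompose_lin:
  fixes p :: "'a::idom poly"
  shows "(pderiv ^^ k) (pcompose p [:x,1:]) = pcompose ((pderiv ^^ k) p) [:x,1:]"
  by (induction k) (simp_all add: pderiv_pcompose pderiv_pCons)

lemma coeff_taylor:
  fixes p :: "'a::field_char_0 poly"
  shows "coeff (pcompose p [:x,1:]) k = poly ((pderiv ^^ k) p) x / fact k"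
proof -
  have "coeff ((pderiv ^^ k) (pcompose p [:x,1:])) 0 = fact k * coeff (pcompose p [:x,1:]) k"
    by (simp add: coeff_higher_pderiv pochhammer_fact)
  also have "coeff ((pderiv ^^ k) (pcompose p [:x,1:])) 0 = poly ((pderiv ^^ k) p) x"
    by (simp add: higher_pderiv_pcompose_lin)
  finally show ?thesis by (simp add: field_simps)
qed

lemma pderiv_map_of_real:
  "pderiv (map_poly (complex_of_real) p) = map_poly of_real (pderiv p)"
  by (rule poly_eqI) (simp add: coeff_pderiv coeff_map_poly)

lemma higher_pderiv_map_of_real:
  "(pderiv ^^ k) (map_poly (complex_of_real) p) = map_poly of_real ((pderiv ^^ k) p)"
  by (induction k) (simp_all add: pderiv_map_of_real)

lemma poly_map_of_real:
  "poly (map_poly (complex_of_real) p) (of_real x) = of_real (poly p x)"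
  by (induction p) (simp_all add: map_poly_pCons)

lemma div_deriv_complex:
  "complex_of_real (div_deriv (map_poly real_of_int P) k x) =
     coeff (pcompose (map_poly (of_int :: int \<Rightarrow> complex) P) [:complex_of_real x, 1:]) k"
proof -
  have e: "map_poly (of_int :: int \<Rightarrow> complex) P = map_poly complex_of_real (map_poly real_of_int P)"
    by (simp add: map_poly_map_poly o_def)
  show ?thesis
    unfolding div_deriv_def coeff_taylor e higher_pderiv_map_of_real poly_map_of_real
    by simp
qed

lemma coeff_lin_mult: fixes u :: "'a::comm_ring_1" shows "coeff ([:u,1:] * p) k = u * coeff p k + (if k = 0 then 0 else coeff p (k - 1))"
  by (cases k) simp_all

lemma prod_lin_coeff_bound:
  fixes M :: "complex multiset" and x :: complex
  assumes "\<forall>\<alpha>\<in>#M. norm (x - \<alpha>) \<le> r" "r \<ge> 0"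
  shows "norm (coeff (\<Prod>\<alpha>\<in>#M. [:x - \<alpha>, 1:]) k) \<le> (if k \<le> size M then 2 ^ size M * r ^ (size M - k) else 0)"
  using assms(1)
proof (induction M arbitrary: k)
  case empty
  then show ?case by (cases k) simp_all
next
  case (add a M)
  define p where "p = (\<Prod>\<alpha>\<in>#M. [:x - \<alpha>, 1:])"
  define m where "m = size M"
  have ua: "norm (x - a) \<le> r" using add.prems by simp
  have IH: "\<And>k. norm (coeff p k) \<le> (if k \<le> m then 2 ^ m * r ^ (m - k) else 0)"
  proof -
    have "\<forall>\<alpha>\<in>#M. norm (x - \<alpha>) \<le> r" using add.prems by simp
    from add.IH[OF this] show "\<And>k. norm (coeff p k) \<le> (if k \<le> m then 2 ^ m * r ^ (m - k) else 0)"
      unfolding p_def m_def .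
  qed
  have e: "coeff (\<Prod>\<alpha>\<in>#add_mset a M. [:x - \<alpha>, 1:]) k = (x - a) * coeff p k + (if k = 0 then 0 else coeff p (k - 1))"
  proof -
    have pe: "(\<Prod>\<alpha>\<in>#add_mset a M. [:x - \<alpha>, 1:]) = [:x - a, 1:] * p" by (simp add: p_def)
    show ?thesis unfolding pe by (rule coeff_lin_mult)
  qed
  have s: "size (add_mset a M) = Suc m" by (simp add: m_def)
  have b1: "norm ((x - a) * coeff p k) \<le> (if k \<le> m then 2 ^ m * r ^ (m + 1 - k) else 0)"
  proof -
    have "norm ((x - a) * coeff p k) \<le> r * norm (coeff p k)"
      by (simp add: norm_mult mult_right_mono ua)
    also have "\<dots> \<le> r * (if k \<le> m then 2 ^ m * r ^ (m - k) else 0)"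
      using IH assms(2) by (simp add: mult_left_mono)
    also have "\<dots> = (if k \<le> m then 2 ^ m * r ^ (m + 1 - k) else 0)"
      by (auto simp: Suc_diff_le)
    finally show ?thesis .
  qed
  show ?case
  proof (cases "k = 0")
    case True
    have "norm (coeff (\<Prod>\<alpha>\<in>#add_mset a M. [:x - \<alpha>, 1:]) k) \<le> 2 ^ m * r ^ (m + 1)"
      unfolding e using b1 True by simp
    also have "\<dots> \<le> 2 ^ Suc m * r ^ (Suc m)" using assms(2) by simp
    finally show ?thesis using True by (simp only: s) simp
  next
    case False
    have b2: "norm (coeff p (k - 1)) \<le> (if k \<le> m + 1 then 2 ^ m * r ^ (m + 1 - k) else 0)"
      using IH[of "k - 1"] False by (cases k) auto
    have "norm (coeff (\<Prod>\<alpha>\<in>#add_mset a M. [:x - \<alpha>, 1:]) k) \<le> norm ((x - a) * coeff p k) + norm (coeff p (k - 1))"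
      unfolding e using False by (simp add: norm_triangle_ineq)
    also have "\<dots> \<le> (if k \<le> m then 2 ^ m * r ^ (m + 1 - k) else 0) + (if k \<le> m + 1 then 2 ^ m * r ^ (m + 1 - k) else 0)"
      using b1 b2 by (rule add_mono)
    also have "\<dots> \<le> (if k \<le> Suc m then 2 ^ Suc m * r ^ (Suc m - k) else 0)"
      using assms(2) by auto
    finally show ?thesis by (simp only: s)
  qed
qed

lemma cauchy_root_bound:
  fixes q :: "complex poly"
  assumes "poly q z = 0" "t > 0" "L > 0" "norm (lead_coeff q) \<ge> L"
    and "\<forall>k<degree q. norm (coeff q k) \<le> B * t ^ (degree q - k)"
  shows "norm z \<le> max t (real (degree q) * B * t / L)"
proof (rule ccontr)
  assume "\<not> ?thesis"
  hence zt: "norm z > t" and zb: "norm z > real (degree q) * B * t / L" by auto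
  define d where "d = degree q"
  have "d \<noteq> 0"
  proof
    assume "d = 0"
    then have "poly q z = lead_coeff q" by (simp add: d_def poly_altdef)
    then show False using assms by auto
  qed
  have B0: "B \<ge> 0"
  proof -
    have "0 \<le> B * t ^ d" using assms(5) \<open>d \<noteq> 0\<close> d_def
      by (metis norm_ge_zero order_trans gr0I diff_zero)
    moreover have "t ^ d > 0" using assms(2) by simp
    ultimately show ?thesis by (auto simp: zero_le_mult_iff)
  qed
  have "poly q z = (\<Sum>i<d. coeff q i * z ^ i) + lead_coeff q * z ^ d"
    by (simp add: poly_altdef d_def lessThan_Suc_atMost[symmetric])
  hence eq: "lead_coeff q * z ^ d = - (\<Sum>i<d. coeff q i * z ^ i)"
    using assms(1) by (simp add: eq_neg_iff_add_eq_0 add.commute)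
  have "L * norm z ^ d \<le> norm (lead_coeff q * z ^ d)"
    using assms(4) by (simp add: norm_mult norm_power mult_right_mono)
  also have "\<dots> \<le> (\<Sum>i<d. norm (coeff q i * z ^ i))"
    unfolding eq norm_minus_cancel by (rule norm_sum)
  also have "\<dots> \<le> (\<Sum>i<d. B * t * norm z ^ (d - 1))"
  proof (rule sum_mono)
    fix i assume i: "i \<in> {..<d}"
    have "norm (coeff q i * z ^ i) \<le> B * t ^ (d - i) * norm z ^ i"
      using assms(5) i by (simp add: norm_mult norm_power d_def mult_right_mono)
    also have "t ^ (d - i) = t * t ^ (d - 1 - i)" using i
      by (metis Suc_diff_Suc lessThan_iff diff_Suc_1 power_Suc diff_commute)
    also have "t ^ (d - 1 - i) \<le> norm z ^ (d - 1 - i)"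
      using zt assms(2) by (simp add: power_mono)
    hence "B * (t * t ^ (d - 1 - i)) * norm z ^ i \<le> B * (t * norm z ^ (d - 1 - i)) * norm z ^ i"
      using B0 assms(2) by (simp add: mult_left_mono mult_right_mono)
    also have "norm z ^ (d - 1 - i) * norm z ^ i = norm z ^ (d - 1)"
      using i by (simp add: power_add[symmetric])
    hence "B * (t * norm z ^ (d - 1 - i)) * norm z ^ i = B * t * norm z ^ (d - 1)"
      by (simp add: mult.assoc)
    finally show "norm (coeff q i * z ^ i) \<le> B * t * norm z ^ (d - 1)" .
  qed
  also have "\<dots> = real d * B * t * norm z ^ (d - 1)" by simp
  finally have "L * norm z ^ d \<le> real d * B * t * norm z ^ (d - 1)" .
  moreover have "norm z ^ d = norm z * norm z ^ (d - 1)"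
    using \<open>d \<noteq> 0\<close> by (metis power_Suc Suc_pred' not_gr0 diff_Suc_1)
  ultimately have "L * norm z * norm z ^ (d - 1) \<le> real d * B * t * norm z ^ (d - 1)"
    by (simp add: mult.assoc)
  moreover have "norm z > 0" using zt assms(2) by linarith
  hence "norm z ^ (d - 1) > 0" by simp
  ultimately have "L * norm z \<le> real d * B * t" by simp
  hence "norm z \<le> real d * B * t / L" using assms(3) by (simp add: field_simps)
  then show False using zb d_def by simp
qed

lemma pcompose_lin_prod:
  "pcompose (\<Prod>\<alpha>\<in>#M. [:- \<alpha>, 1:]) [:x, 1:] = (\<Prod>\<alpha>\<in>#M. [:x - (\<alpha>::complex), 1:])"
proof (induction M)
  case empty
  then show ?case by (simp add: pcompose_1)
next
  case (add a M)
  have "pcompose [:-a, 1:] [:x, 1:] = [:x - a, 1:]" by (simp add: pcompose_pCons)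
  then show ?case using add by (simp add: pcompose_mult del: mult_pCons_left)
qed

lemma taylor_roots:
  fixes p :: "complex poly"
  shows "pcompose p [:x, 1:] = smult (lead_coeff p) (\<Prod>\<alpha>\<in>#proots p. [:x - \<alpha>, 1:])"
proof -
  have "pcompose p [:x, 1:] = pcompose (smult (lead_coeff p) (\<Prod>\<alpha>\<in>#proots p. [:- \<alpha>, 1:])) [:x, 1:]"
    by (simp only: complex_poly_decompose_multiset)
  also have "\<dots> = smult (lead_coeff p) (\<Prod>\<alpha>\<in>#proots p. [:x - \<alpha>, 1:])"
    by (simp only: pcompose_smult pcompose_lin_prod)
  finally show ?thesis .
qed

lemma coeff_lin_power_bound:
  fixes y :: complex
  shows "norm (coeff ([:y, 1:] ^ i) j) \<le> (1 + norm y) ^ i"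
proof (cases "j \<le> i")
  case True
  have "norm (coeff ([:y, 1:] ^ i) j) = real (i choose j) * norm y ^ (i - j)"
    using True by (simp add: coeff_linear_poly_power norm_mult norm_power)
  also have "\<dots> = real (i choose j) * 1 ^ j * norm y ^ (i - j)" by simp
  also have "\<dots> \<le> (\<Sum>k\<le>i. real (i choose k) * 1 ^ k * norm y ^ (i - k))"
    using True by (intro member_le_sum) auto
  also have "\<dots> = (1 + norm y) ^ i" by (simp only: binomial_ring)
  finally show ?thesis .
next
  case False
  have "degree ([:y, 1:] ^ i) \<le> i"
    by (metis degree_linear_power order_refl)
  then have "coeff ([:y, 1:] ^ i) j = 0" using False by (intro coeff_eq_0) auto
  then show ?thesis by simp
qed

lemma coeff_pcompose_lin_bound:
  fixes q :: "complex poly"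
  shows "norm (coeff (pcompose q [:y, 1:]) j) \<le> (\<Sum>i\<le>degree q. norm (coeff q i)) * (1 + norm y) ^ degree q"
proof -
  have dm: "degree (map_poly (\<lambda>x. [:x:]) q) = degree q"
    by (rule degree_map_poly) simp
  have "pcompose q [:y, 1:] = (\<Sum>i\<le>degree q. smult (coeff q i) ([:y, 1:] ^ i))"
    unfolding pcompose_altdef poly_altdef dm
    by (simp add: coeff_map_poly)
  hence "coeff (pcompose q [:y, 1:]) j = (\<Sum>i\<le>degree q. coeff q i * coeff ([:y, 1:] ^ i) j)"
    by (simp add: coeff_sum)
  hence "norm (coeff (pcompose q [:y, 1:]) j) \<le> (\<Sum>i\<le>degree q. norm (coeff q i) * norm (coeff ([:y, 1:] ^ i) j))"
    by (metis (no_types, lifting) norm_mult norm_sum sum.cong)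
  also have "\<dots> \<le> (\<Sum>i\<le>degree q. norm (coeff q i) * (1 + norm y) ^ degree q)"
  proof (rule sum_mono)
    fix i assume "i \<in> {..degree q}"
    then have "(1 + norm y) ^ i \<le> (1 + norm y) ^ degree q"
      by (intro power_increasing) auto
    then show "norm (coeff q i) * norm (coeff ([:y, 1:] ^ i) j) \<le> norm (coeff q i) * (1 + norm y) ^ degree q"
      using coeff_lin_power_bound[of y i j] by (intro mult_left_mono) auto
  qed
  also have "\<dots> = (\<Sum>i\<le>degree q. norm (coeff q i)) * (1 + norm y) ^ degree q"
    by (simp add: sum_distrib_right)
  finally show ?thesis .
qed

lemma height_ge: "\<bar>real_of_int (coeff P i)\<bar> \<le> height P"
proof (cases "i \<le> degree P")
  case True
  show ?thesis
  proof -
    have "\<bar>coeff P i\<bar> \<le> Max ((\<lambda>i. \<bar>coeff P i\<bar>) ` {..degree P})"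
      by (intro Max_ge) (use True in auto)
    then show ?thesis unfolding height_def by linarith
  qed
next
  case False
  then have "coeff P i = 0" by (simp add: coeff_eq_0)
  moreover have "\<bar>coeff P 0\<bar> \<le> Max ((\<lambda>i. \<bar>coeff P i\<bar>) ` {..degree P})"
    by (intro Max_ge) auto
  moreover have "0 \<le> \<bar>coeff P 0\<bar>" by simp
  ultimately show ?thesis unfolding height_def by linarith
qed

lemma height_attained: "\<exists>i\<le>degree P. height P = \<bar>real_of_int (coeff P i)\<bar>"
proof -
  have "Max ((\<lambda>i. \<bar>coeff P i\<bar>) ` {..degree P}) \<in> (\<lambda>i. \<bar>coeff P i\<bar>) ` {..degree P}"
    by (intro Max_in) auto
  then obtain i where "i \<le> degree P" "Max ((\<lambda>i. \<bar>coeff P i\<bar>) ` {..degree P}) = \<bar>coeff P i\<bar>"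
    by (metis (no_types, lifting) atMost_iff imageE)
  then show ?thesis unfolding height_def by (intro exI[of _ i]) simp
qed

lemma height_ge_1: "P \<noteq> 0 \<Longrightarrow> height P \<ge> 1"
proof -
  assume "P \<noteq> 0"
  then have "lead_coeff P \<noteq> 0" by simp
  then have "\<bar>real_of_int (lead_coeff P)\<bar> \<ge> 1" by linarith
  then show ?thesis using height_ge[of P "degree P"] by linarith
qed

lemma powr_split: "(H::real) > 0 \<Longrightarrow> H powr (1 - real m * \<delta>) = H * (H powr (-\<delta>)) ^ m"
proof -
  assume H: "H > 0"
  have "H powr (1 - real m * \<delta>) = H powr 1 * H powr (real m * (-\<delta>))"
    using powr_add[of H 1 "real m * (-\<delta>)"] by simp
  also have "\<dots> = H * H powr (real m * (-\<delta>))" using H by simp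
  also have "\<dots> = H * (H powr (-\<delta>)) ^ m" using H by (simp add: powr_power)
  finally show ?thesis .
qed

lemma TC_degree: "degree (pcompose p [:x,1:]) = degree (p::complex poly)"
  by (simp add: degree_pcompose)

lemma TC_lead: "lead_coeff (pcompose p [:x,1:]) = lead_coeff (p::complex poly)"
  by (simp add: lead_coeff_comp)

lemma TC_poly: "poly (pcompose p [:x,1:]) z = poly (p::complex poly) (x + z)"
  by (simp add: poly_pcompose)

lemma TC_inv: "pcompose (pcompose p [:x,1:]) [:-x,1:] = (p::complex poly)"
  by (simp add: pcompose_assoc[symmetric] pcompose_pCons)

lemma PC_degree: "degree (map_poly (of_int :: int \<Rightarrow> complex) P) = degree P"
  by (simp add: degree_map_poly)

lemma PC_coeff: "coeff (map_poly (of_int :: int \<Rightarrow> complex) P) i = of_int (coeff P i)"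
  by (simp add: coeff_map_poly)

lemma root_bound_int:
  assumes "degree P \<ge> 1" "poly (map_poly (of_int :: int \<Rightarrow> complex) P) \<alpha> = 0"
  shows "norm \<alpha> \<le> real (degree P) * height P"
proof -
  have P0: "P \<noteq> 0" using assms(1) by auto
  have H1: "height P \<ge> 1" by (rule height_ge_1[OF P0])
  have "norm \<alpha> \<le> max 1 (real (degree (map_poly (of_int :: int \<Rightarrow> complex) P)) * height P * 1 / 1)"
  proof (rule cauchy_root_bound[OF assms(2)])
    show "1 \<le> norm (lead_coeff (map_poly (of_int :: int \<Rightarrow> complex) P))"
    proof -
      have "lead_coeff P \<noteq> 0" using P0 by simp
      then have "\<bar>lead_coeff P\<bar> \<ge> 1" by linarith
      then have "\<bar>real_of_int (lead_coeff P)\<bar> \<ge> 1" by linarith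
      then show ?thesis by (simp add: PC_degree PC_coeff)
    qed
    show "\<forall>k<degree (map_poly (of_int :: int \<Rightarrow> complex) P). norm (coeff (map_poly (of_int :: int \<Rightarrow> complex) P) k) \<le> height P * 1 ^ (degree (map_poly (of_int :: int \<Rightarrow> complex) P) - k)"
      using height_ge[of P] by (simp add: PC_coeff)
  qed auto
  moreover have "real (degree P) * height P \<ge> 1"
  proof -
    have d1: "real (degree P) \<ge> 1" using assms(1) by simp
    have "real (degree P) * height P \<ge> 1 * 1" by (rule mult_mono) (use d1 H1 in auto)
    then show ?thesis by simp
  qed
  ultimately show ?thesis by (simp add: PC_degree)
qed

lemma pow_helper:
  fixes c h :: real
  assumes "0 < h" "h \<le> 1" "0 < c" "m \<le> N" "l \<le> m"
  shows "(c * h) ^ m \<le> (max 1 c) ^ N * h ^ l"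
proof -
  have "(c * h) ^ m = c ^ m * h ^ m" by (simp add: power_mult_distrib)
  also have "c ^ m \<le> (max 1 c) ^ m" using assms by (intro power_mono) auto
  also have "(max 1 c) ^ m \<le> (max 1 c) ^ N" using assms by (intro power_increasing) auto
  also have "h ^ m \<le> h ^ l" using assms by (intro power_decreasing) auto
  finally show ?thesis using assms by (simp add: mult_mono)
qed

lemma h_facts:
  assumes "H \<ge> (1::real)" "\<delta> > 0"
  shows "H powr (-\<delta>) > 0" "H powr (-\<delta>) \<le> 1"
proof -
  show "H powr (-\<delta>) > 0" using assms by simp
  have "H powr \<delta> \<ge> 1" using assms by (intro ge_one_powr_ge_zero) auto
  then show "H powr (-\<delta>) \<le> 1" by (simp add: powr_minus_divide divide_le_eq)
qed

lemma dir2: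
  fixes \<xi> \<delta> c7 :: real and n :: nat
  assumes n1: "n \<ge> 1" and d0: "\<delta> > 0" and c7: "c7 > 0"
  shows "\<exists>c6>0. \<forall>P::int poly. (degree P = n \<or> (degree P = n + 1 \<and> lead_coeff P = 1)) \<longrightarrow>
     (\<exists>A :: complex multiset. size A = n \<and> A \<subseteq># proots (map_poly (of_int :: int \<Rightarrow> complex) P) \<and>
            (\<forall>\<alpha>\<in>#A. cmod (complex_of_real \<xi> - \<alpha>) \<le> c7 * height P powr (- \<delta>))) \<longrightarrow>
     (\<forall>k\<le>n. \<bar>div_deriv (map_poly real_of_int P) k \<xi>\<bar> \<le> c6 * height P powr (1 - real (n - k) * \<delta>))"
proof -
  define C where "C = max 1 c7"
  define G where "G = 2 ^ n * C ^ (n + 1)"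
  define c6 where "c6 = (\<bar>\<xi>\<bar> + real n + 2) * G"
  have C1: "C \<ge> 1" by (simp add: C_def)
  have G0: "G > 0" using C1 by (simp add: G_def)
  have c60: "c6 > 0" using G0 by (simp add: c6_def)
  show ?thesis
  proof (intro exI[of _ c6] conjI allI impI c60)
    fix P :: "int poly" and k :: nat
    assume deg: "degree P = n \<or> (degree P = n + 1 \<and> lead_coeff P = 1)"
      and ex: "\<exists>A :: complex multiset. size A = n \<and> A \<subseteq># proots (map_poly (of_int :: int \<Rightarrow> complex) P) \<and>
            (\<forall>\<alpha>\<in>#A. cmod (complex_of_real \<xi> - \<alpha>) \<le> c7 * height P powr (- \<delta>))"
      and k: "k \<le> n"
    define PC where "PC = map_poly (of_int :: int \<Rightarrow> complex) P"
    define TC where "TC = pcompose PC [:complex_of_real \<xi>, 1:]"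
    define H where "H = height P"
    define h where "h = H powr (-\<delta>)"
    define R where "R = proots PC"
    obtain A where A: "size A = n" "A \<subseteq># R" "\<forall>\<alpha>\<in>#A. cmod (complex_of_real \<xi> - \<alpha>) \<le> c7 * h"
      using ex by (auto simp: R_def PC_def h_def H_def)
    have P0: "P \<noteq> 0" using deg n1 by auto
    have H1: "H \<ge> 1" unfolding H_def by (rule height_ge_1[OF P0])
    have h0: "h > 0" and h1: "h \<le> 1" using h_facts[OF H1 d0] by (simp_all add: h_def)
    have F1: "\<bar>div_deriv (map_poly real_of_int P) k \<xi>\<bar> = norm (coeff TC k)"
      unfolding TC_def PC_def div_deriv_complex[symmetric] by simp
    have F2: "H powr (1 - real (n - k) * \<delta>) = H * h ^ (n - k)"
      unfolding h_def using H1 by (intro powr_split) simp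
    define q where "q = (\<Prod>\<alpha>\<in>#A. [:complex_of_real \<xi> - \<alpha>, 1:])"
    have qraw: "norm (coeff q j) \<le> (if j \<le> n then 2 ^ n * (c7 * h) ^ (n - j) else 0)" for j
      unfolding q_def A(1)[symmetric] by (rule prod_lin_coeff_bound) (use A(3) h0 c7 in auto)
    have qb: "norm (coeff q j) \<le> G * h ^ (n - j)" if "j \<le> n" for j
    proof -
      have "norm (coeff q j) \<le> 2 ^ n * (c7 * h) ^ (n - j)" using qraw[of j] that by simp
      also have "(c7 * h) ^ (n - j) \<le> C ^ (n + 1) * h ^ (n - j)"
        unfolding C_def by (rule pow_helper) (use h0 h1 c7 in auto)
      finally show ?thesis by (simp add: G_def mult.assoc mult_left_mono)
    qed
    have qb': "norm (coeff q (j - 1)) \<le> G * h ^ (n - j)" if "1 \<le> j" "j \<le> n" for j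
    proof -
      have "norm (coeff q (j - 1)) \<le> 2 ^ n * (c7 * h) ^ (n - (j - 1))" using qraw[of "j - 1"] that by (cases j) auto
      also have "(c7 * h) ^ (n - (j - 1)) \<le> C ^ (n + 1) * h ^ (n - j)"
        unfolding C_def by (rule pow_helper) (use h0 h1 c7 that in auto)
      finally show ?thesis by (simp add: G_def mult.assoc mult_left_mono)
    qed
    obtain B where RB: "R = A + B" using A(2) by (auto simp: mset_subset_eq_exists_conv)
    have sR: "size R = degree P" unfolding R_def PC_def by (simp add: size_proots_complex PC_degree)
    have TCe: "TC = smult (lead_coeff PC) (q * (\<Prod>\<alpha>\<in>#B. [:complex_of_real \<xi> - \<alpha>, 1:]))"
      unfolding TC_def taylor_roots R_def[symmetric] RB q_def by simp
    have "norm (coeff TC k) \<le> c6 * (H * h ^ (n - k))"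
    proof (cases "degree P = n")
      case True
      then have "B = {#}" using sR A(1) RB by simp
      then have "TC = smult (of_int (lead_coeff P)) q" using TCe by (simp add: PC_def PC_degree PC_coeff)
      then have "norm (coeff TC k) = \<bar>real_of_int (lead_coeff P)\<bar> * norm (coeff q k)" by (simp add: norm_mult)
      also have "\<dots> \<le> H * (G * h ^ (n - k))"
        using height_ge[of P "degree P"] qb[OF k] unfolding H_def by (intro mult_mono) auto
      also have "\<dots> \<le> c6 * (H * h ^ (n - k))"
        using H1 h0 G0 by (simp add: c6_def field_simps mult_right_mono)
      finally show ?thesis .
    next
      case False
      then have dP: "degree P = n + 1" and lP: "lead_coeff P = 1" using deg by auto
      then have "size B = 1" using sR A(1) RB by simp
      then obtain \<beta> where B: "B = {#\<beta>#}" using size_1_singleton_mset by blast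
      have "\<beta> \<in># R" using RB B by simp
      have PC0: "PC \<noteq> 0" using dP unfolding PC_def by (metis PC_degree degree_0 add_eq_0_iff_both_eq_0 zero_neq_one)
      then have "poly PC \<beta> = 0" using \<open>\<beta> \<in># R\<close> unfolding R_def by simp
      then have "norm \<beta> \<le> real (degree P) * H" unfolding H_def PC_def
        using dP by (intro root_bound_int) auto
      then have nb: "norm (complex_of_real \<xi> - \<beta>) \<le> \<bar>\<xi>\<bar> + (real n + 1) * H"
        using dP norm_triangle_ineq4[of "complex_of_real \<xi>" \<beta>] by (simp add: add.commute)
      have lPC: "lead_coeff PC = 1" using lP by (simp add: PC_def PC_degree PC_coeff)
      have "TC = [:complex_of_real \<xi> - \<beta>, 1:] * q" using TCe lPC B by (simp add: mult.commute)
      then have ce: "coeff TC k = (complex_of_real \<xi> - \<beta>) * coeff q k + (if k = 0 then 0 else coeff q (k - 1))"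
        by (simp only: coeff_lin_mult)
      have "norm (coeff TC k) \<le> norm (complex_of_real \<xi> - \<beta>) * norm (coeff q k) + (if k = 0 then 0 else norm (coeff q (k - 1)))"
        unfolding ce by (auto intro: order_trans[OF norm_triangle_ineq] simp: norm_mult)
      also have "\<dots> \<le> (\<bar>\<xi>\<bar> + (real n + 1) * H) * (G * h ^ (n - k)) + G * h ^ (n - k)"
      proof (rule add_mono)
        show "norm (complex_of_real \<xi> - \<beta>) * norm (coeff q k) \<le> (\<bar>\<xi>\<bar> + (real n + 1) * H) * (G * h ^ (n - k))"
          using nb qb[OF k] H1 by (intro mult_mono) auto
        show "(if k = 0 then 0 else norm (coeff q (k - 1))) \<le> G * h ^ (n - k)"
          using qb'[of k] k G0 h0 by auto
      qed
      also have "\<dots> = (\<bar>\<xi>\<bar> + (real n + 1) * H + 1) * (G * h ^ (n - k))" by (simp add: algebra_simps)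
      also have "\<dots> \<le> ((\<bar>\<xi>\<bar> + real n + 2) * H) * (G * h ^ (n - k))"
      proof (rule mult_right_mono)
        have "\<bar>\<xi>\<bar> \<le> \<bar>\<xi>\<bar> * H" using H1 by (simp add: mult_le_cancel_left1)
        then show "\<bar>\<xi>\<bar> + (real n + 1) * H + 1 \<le> (\<bar>\<xi>\<bar> + real n + 2) * H"
          using H1 by (simp add: algebra_simps)
      qed (use G0 h0 in auto)
      also have "\<dots> = c6 * (H * h ^ (n - k))" by (simp add: c6_def algebra_simps)
      finally show ?thesis .
    qed
    then show "\<bar>div_deriv (map_poly real_of_int P) k \<xi>\<bar> \<le> c6 * height P powr (1 - real (n - k) * \<delta>)"
      unfolding F1 H_def[symmetric] F2 .
  qed
qed

lemma dir1:
  fixes \<xi> \<delta> c6 :: real and n :: nat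
  assumes n1: "n \<ge> 1" and d0: "\<delta> > 0" and c6: "c6 > 0"
  shows "\<exists>c7>0. \<forall>P::int poly. (degree P = n \<or> (degree P = n + 1 \<and> lead_coeff P = 1)) \<longrightarrow>
     (\<forall>k\<le>n. \<bar>div_deriv (map_poly real_of_int P) k \<xi>\<bar> \<le> c6 * height P powr (1 - real (n - k) * \<delta>)) \<longrightarrow>
     (\<exists>A :: complex multiset. size A = n \<and> A \<subseteq># proots (map_poly (of_int :: int \<Rightarrow> complex) P) \<and>
            (\<forall>\<alpha>\<in>#A. cmod (complex_of_real \<xi> - \<alpha>) \<le> c7 * height P powr (- \<delta>)))"
proof -
  define K where "K = (1 + \<bar>\<xi>\<bar>) ^ (n + 1)"
  define H0 where "H0 = max (4 * K) ((4 * K * real n * c6) powr (1 / \<delta>))"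
  define M where "M = 2 ^ (n + 3) * K"
  define D where "D = M * (c6 + 1)"
  define E1 where "E1 = (\<bar>\<xi>\<bar> + (real n + 1) * H0) * H0 powr \<delta>"
  define E2 where "E2 = max 1 (2 * K * real n * c6)"
  define E3 where "E3 = max 1 (real n * D ^ (n + 1))"
  define c7 where "c7 = max E1 (max E2 E3)"
  define x where "x = complex_of_real \<xi>"
  have K1: "K \<ge> 1" unfolding K_def by (intro one_le_power) simp
  have H04: "H0 \<ge> 4 * K" unfolding H0_def by simp
  have H0pos: "H0 > 0" using H04 K1 by simp
  have "1 * 1 \<le> (2::real) ^ (n + 3) * K" by (rule mult_mono) (use K1 in auto)
  then have M1: "M \<ge> 1" unfolding M_def by simp
  have "1 * 1 \<le> M * (c6 + 1)" by (rule mult_mono) (use M1 c6 in auto)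
  then have D1: "D \<ge> 1" unfolding D_def by simp
  have E2c: "E2 \<le> c7" and E3c: "E3 \<le> c7" and E1c: "E1 \<le> c7" unfolding c7_def by auto
  have c7pos: "c7 > 0" using E2c unfolding E2_def by linarith
  show ?thesis
  proof (intro exI[of _ c7] conjI allI impI c7pos)
    fix P :: "int poly"
    assume deg: "degree P = n \<or> (degree P = n + 1 \<and> lead_coeff P = 1)"
      and bnd: "\<forall>k\<le>n. \<bar>div_deriv (map_poly real_of_int P) k \<xi>\<bar> \<le> c6 * height P powr (1 - real (n - k) * \<delta>)"
    define PC where "PC = map_poly (of_int :: int \<Rightarrow> complex) P"
    define TC where "TC = pcompose PC [:x, 1:]"
    define H where "H = height P"
    define h where "h = H powr (-\<delta>)"
    define R where "R = proots PC"
    have P0: "P \<noteq> 0" using deg n1 by auto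
    have H1: "H \<ge> 1" unfolding H_def by (rule height_ge_1[OF P0])
    have h0: "h > 0" and h1: "h \<le> 1" using h_facts[OF H1 d0] by (simp_all add: h_def)
    have dPC: "degree PC = degree P" unfolding PC_def by (rule PC_degree)
    have PC0: "PC \<noteq> 0" using dPC P0 deg n1 by (metis degree_0 le_zero_eq not_one_le_zero add_is_0)
    have sR: "size R = degree P" unfolding R_def using dPC by (simp add: size_proots_complex)
    have rootR: "poly PC \<alpha> = 0" if "\<alpha> \<in># R" for \<alpha> using that PC0 unfolding R_def by simp
    have dTC: "degree TC = degree P" unfolding TC_def using dPC by (simp add: TC_degree)
    have lTC: "lead_coeff TC = lead_coeff PC" unfolding TC_def using TC_lead by simp
    have hb: "norm (coeff TC k) \<le> c6 * (H * h ^ (n - k))" if "k \<le> n" for k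
    proof -
      have "\<bar>div_deriv (map_poly real_of_int P) k \<xi>\<bar> = norm (coeff TC k)"
        unfolding TC_def PC_def x_def div_deriv_complex[symmetric] by simp
      moreover have "H powr (1 - real (n - k) * \<delta>) = H * h ^ (n - k)"
        unfolding h_def using H1 by (intro powr_split) simp
      ultimately show ?thesis using bnd that unfolding H_def by metis
    qed
    have dP: "degree P \<le> n + 1" using deg by auto
    obtain A0 where A0: "A0 \<subseteq># R" "size A0 = n"
    proof (cases "degree P = n")
      case True then show ?thesis using that[of R] sR by simp
    next
      case False
      then have "size R = Suc n" using deg sR by simp
      moreover obtain a N where "R = add_mset a N" using size_eq_Suc_imp_eq_union[OF \<open>size R = Suc n\<close>] by blast
      ultimately have "R = add_mset a N" "size N = n" by auto
      then show ?thesis using that[of N] by simp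
    qed
    have main: "\<exists>A. size A = n \<and> A \<subseteq># R \<and> (\<forall>\<alpha>\<in>#A. norm (x - \<alpha>) \<le> c7 * h)"
    proof (cases "H < H0")
      case True
      have "norm (x - \<alpha>) \<le> c7 * h" if "\<alpha> \<in># A0" for \<alpha>
      proof -
        have "\<alpha> \<in># R" using that A0 by (auto dest: mset_subset_eqD)
        then have "norm \<alpha> \<le> real (degree P) * H" unfolding H_def
          using rootR deg n1 by (intro root_bound_int) (auto simp: PC_def)
        also have "\<dots> \<le> (real n + 1) * H0" using dP True H1 by (intro mult_mono) auto
        finally have "norm (x - \<alpha>) \<le> \<bar>\<xi>\<bar> + (real n + 1) * H0"
          using norm_triangle_ineq4[of x \<alpha>] by (simp add: x_def)
        also have "\<dots> \<le> E1 * h"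
        proof -
          have "H powr \<delta> \<le> H0 powr \<delta>" using True H1 d0 by (intro powr_mono2) auto
          moreover have "H powr \<delta> > 0" using H1 by simp
          ultimately have "1 \<le> H0 powr \<delta> * h" unfolding h_def by (simp add: powr_minus_divide divide_simps)
          moreover have "\<bar>\<xi>\<bar> + (real n + 1) * H0 \<ge> 0" using H0pos by simp
          ultimately have "(\<bar>\<xi>\<bar> + (real n + 1) * H0) * 1 \<le> (\<bar>\<xi>\<bar> + (real n + 1) * H0) * (H0 powr \<delta> * h)"
            by (intro mult_left_mono) auto
          then show ?thesis by (simp add: E1_def mult.assoc)
        qed
        also have "\<dots> \<le> c7 * h" using E1c h0 by (simp add: mult_right_mono)
        finally show ?thesis .
      qed
      then show ?thesis using A0 by blast
    next
      case False
      then have HH0: "H \<ge> H0" by simp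
      have small: "K * real n * c6 * h \<le> 1 / 4"
      proof -
        have "(4 * K * real n * c6) powr (1 / \<delta>) \<le> H" using HH0 unfolding H0_def by simp
        then have "((4 * K * real n * c6) powr (1 / \<delta>)) powr \<delta> \<le> H powr \<delta>"
          using d0 by (intro powr_mono2) auto
        moreover have "((4 * K * real n * c6) powr (1 / \<delta>)) powr \<delta> = 4 * K * real n * c6"
          using d0 K1 c6 n1 by (simp add: powr_powr)
        ultimately have le: "4 * K * real n * c6 \<le> H powr \<delta>" by simp
        have "H powr \<delta> > 0" using H1 by simp
        then have "4 * K * real n * c6 * h \<le> 1" unfolding h_def using le
          by (simp add: powr_minus_divide divide_simps)
        then show ?thesis by simp
      qed
      define b where "b = norm (coeff TC n)"
      have bn: "H \<le> 2 * K * b"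
      proof -
        obtain i0 where i0: "height P = \<bar>real_of_int (coeff P i0)\<bar>" using height_attained by blast
        have "H = norm (coeff PC i0)" unfolding H_def i0 PC_def by (simp add: PC_coeff)
        also have "\<dots> = norm (coeff (pcompose TC [:-x, 1:]) i0)" unfolding TC_def by (simp add: TC_inv)
        also have "\<dots> \<le> (\<Sum>i\<le>degree TC. norm (coeff TC i)) * (1 + norm (-x)) ^ degree TC"
          by (rule coeff_pcompose_lin_bound)
        also have "\<dots> \<le> (real n * c6 * H * h + b + 1) * K"
        proof (rule mult_mono)
          have "norm (-x) = \<bar>\<xi>\<bar>" by (simp add: x_def)
          then show "(1 + norm (-x)) ^ degree TC \<le> K" unfolding K_def using dTC dP
            by (simp only:) (rule power_increasing, auto)
          have "(\<Sum>i\<le>degree TC. norm (coeff TC i)) \<le> (\<Sum>i\<le>n + 1. norm (coeff TC i))"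
            using dTC dP by (intro sum_mono2) auto
          also have "\<dots> = (\<Sum>i<n. norm (coeff TC i)) + b + norm (coeff TC (n + 1))"
            by (simp add: b_def lessThan_Suc_atMost[symmetric])
          also have "(\<Sum>i<n. norm (coeff TC i)) \<le> (\<Sum>i<n. c6 * H * h)"
          proof (rule sum_mono)
            fix i assume i: "i \<in> {..<n}"
            have "norm (coeff TC i) \<le> c6 * (H * h ^ (n - i))" using hb i by simp
            also have "h ^ (n - i) \<le> h ^ 1" using h0 h1 i by (intro power_decreasing) auto
            then have "c6 * (H * h ^ (n - i)) \<le> c6 * H * h" using c6 H1 by (simp add: mult_left_mono)
            finally show "norm (coeff TC i) \<le> c6 * H * h" .
          qed
          also have "norm (coeff TC (n + 1)) \<le> 1"
          proof (cases "degree P = n")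
            case True then show ?thesis using dTC by (simp add: coeff_eq_0)
          next
            case False
            then have "degree TC = n + 1" "lead_coeff P = 1" using deg dTC by auto
            then show ?thesis using lTC by (simp add: PC_def PC_degree PC_coeff)
          qed
          finally show "(\<Sum>i\<le>degree TC. norm (coeff TC i)) \<le> real n * c6 * H * h + b + 1" by simp
        qed (use K1 c6 H1 h0 in \<open>auto simp: b_def\<close>)
        finally have "H \<le> (real n * c6 * H * h + b + 1) * K" .
        moreover have "K * real n * c6 * h * H \<le> 1 / 4 * H" using small H1 by (intro mult_right_mono) auto
        moreover have "K \<le> H / 4" using H04 HH0 by simp
        ultimately show ?thesis by (simp add: algebra_simps)
      qed
      have bH: "H / (2 * K) \<le> b" using bn K1 by (simp add: field_simps)
      have "H / (2 * K) > 0" using H1 K1 by simp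
      then have bpos: "b > 0" using bH by linarith
      show ?thesis
      proof (cases "degree P = n")
        case True
        have "norm (x - \<alpha>) \<le> c7 * h" if "\<alpha> \<in># R" for \<alpha>
        proof -
          have "poly TC (\<alpha> - x) = 0" unfolding TC_def TC_poly using rootR[OF that] by simp
          then have "norm (\<alpha> - x) \<le> max h (real (degree TC) * (c6 * H) * h / (H / (2 * K)))"
          proof (rule cauchy_root_bound)
            show "0 < h" by (rule h0)
            show "0 < H / (2 * K)" using H1 K1 by simp
            show "H / (2 * K) \<le> norm (lead_coeff TC)" using bn K1 True dTC by (simp add: b_def field_simps)
            show "\<forall>k<degree TC. norm (coeff TC k) \<le> c6 * H * h ^ (degree TC - k)"
              using hb True dTC by (simp add: mult.assoc)
          qed
          also have "\<dots> \<le> E2 * h"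
          proof -
            have "real (degree TC) * (c6 * H) * h / (H / (2 * K)) = (2 * K * real n * c6) * h"
              using True dTC H1 K1 by (simp add: field_simps)
            also have "\<dots> \<le> E2 * h" unfolding E2_def using h0 by (intro mult_right_mono) auto
            finally show ?thesis unfolding E2_def using h0 by auto
          qed
          also have "\<dots> \<le> c7 * h" using E2c h0 by (simp add: mult_right_mono)
          finally show ?thesis by (simp add: norm_minus_commute)
        qed
        then show ?thesis using sR True by blast
      next
        case False
        then have dPn: "degree P = n + 1" and lP: "lead_coeff P = 1" using deg by auto
        have lPC: "lead_coeff PC = 1" using lP dPC by (simp add: PC_def PC_coeff)
        have TCe: "TC = (\<Prod>\<alpha>\<in>#R. [:x - \<alpha>, 1:])" unfolding TC_def taylor_roots lPC R_def by simp
        obtain \<alpha> where \<alpha>R: "\<alpha> \<in># R" and \<alpha>b: "norm (x - \<alpha>) > b / 2 ^ (n + 2)"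
        proof (rule ccontr)
          assume "\<not> thesis"
          then have all: "\<forall>\<alpha>\<in>#R. norm (x - \<alpha>) \<le> b / 2 ^ (n + 2)" using that by force
          define r where "r = b / 2 ^ (n + 2)"
          have "norm (coeff TC n) \<le> (if n \<le> size R then 2 ^ size R * r ^ (size R - n) else 0)"
            unfolding TCe by (rule prod_lin_coeff_bound) (use all bpos in \<open>auto simp: r_def\<close>)
          then have "b \<le> (if n \<le> size R then 2 ^ size R * r ^ (size R - n) else 0)" by (simp add: b_def)
          also have "\<dots> = b / 2" using sR dPn by (simp add: power_add r_def)
          finally show False using bpos by simp
        qed
        obtain R' where RR': "R = add_mset \<alpha> R'" using multi_member_split[OF \<alpha>R] by blast
        define q where "q = (\<Prod>\<alpha>\<in>#R'. [:x - \<alpha>, 1:])"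
        define u where "u = x - \<alpha>"
        have TCq: "TC = [:u, 1:] * q" unfolding TCe RR' q_def u_def by simp
        have nu: "H / M \<le> norm u"
        proof -
          have "H / M \<le> b / 2 ^ (n + 2)" using bn K1 unfolding M_def by (simp add: field_simps power_add)
          then show ?thesis using \<alpha>b unfolding u_def by simp
        qed
        have Mpos: "M > 0" using M1 by simp
        have qrec: "norm (coeff q k) \<le> D ^ (k + 1) * h ^ (n - k)" if "k \<le> n" for k
          using that
        proof (induction k)
          case (0)
          have ce: "coeff TC 0 = u * coeff q 0" unfolding TCq by (simp add: coeff_lin_mult del: mult_pCons_left)
          have "norm (coeff q 0) * (H / M) \<le> norm (coeff q 0) * norm u"
            using nu by (intro mult_left_mono) auto
          also have "\<dots> = norm (coeff TC 0)" unfolding ce by (simp add: norm_mult)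
          also have "\<dots> \<le> c6 * (H * h ^ (n - 0))" using hb[of 0] by simp
          finally have "norm (coeff q 0) * H \<le> M * c6 * H * h ^ n" using Mpos by (simp add: field_simps)
          then have "norm (coeff q 0) \<le> M * c6 * h ^ n" using H1 by (simp add: mult.commute mult.left_commute)
          also have "\<dots> \<le> D * h ^ n" unfolding D_def using Mpos h0 c6 by (intro mult_right_mono) auto
          finally show ?case by simp
        next
          case (Suc j)
          have IH: "norm (coeff q j) \<le> D ^ (j + 1) * h ^ (n - j)" using Suc by simp
          have ce: "u * coeff q (Suc j) = coeff TC (Suc j) - coeff q j"
            unfolding TCq coeff_lin_mult by simp
          have "h ^ (n - j) \<le> h ^ (n - Suc j)" using h0 h1 by (intro power_decreasing) auto
          then have "D ^ (j + 1) * h ^ (n - j) \<le> D ^ (j + 1) * h ^ (n - Suc j)"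
            using D1 by (intro mult_left_mono) auto
          also have "\<dots> = (D ^ (j + 1) * h ^ (n - Suc j)) * 1" by simp
          also have "\<dots> \<le> (D ^ (j + 1) * h ^ (n - Suc j)) * H"
            using H1 D1 h0 by (intro mult_left_mono) auto
          finally have prev: "norm (coeff q j) \<le> D ^ Suc j * H * h ^ (n - Suc j)"
            using IH by (simp add: algebra_simps)
          have "norm (coeff q (Suc j)) * (H / M) \<le> norm (coeff q (Suc j)) * norm u"
            using nu by (intro mult_left_mono) auto
          also have "\<dots> = norm (coeff TC (Suc j) - coeff q j)" unfolding ce[symmetric] by (simp add: norm_mult)
          also have "\<dots> \<le> norm (coeff TC (Suc j)) + norm (coeff q j)" by (rule norm_triangle_ineq4)
          also have "\<dots> \<le> c6 * (H * h ^ (n - Suc j)) + D ^ Suc j * H * h ^ (n - Suc j)"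
            using hb[OF Suc.prems] prev by (rule add_mono)
          finally have "norm (coeff q (Suc j)) * H \<le> M * (c6 + D ^ Suc j) * H * h ^ (n - Suc j)"
            using Mpos by (simp add: field_simps)
          then have "norm (coeff q (Suc j)) \<le> M * (c6 + D ^ Suc j) * h ^ (n - Suc j)"
            using H1 by (simp add: mult.commute mult.left_commute)
          also have "\<dots> \<le> D ^ (Suc j + 1) * h ^ (n - Suc j)"
          proof (rule mult_right_mono)
            have "D ^ Suc j \<ge> 1" using D1 by (rule one_le_power)
            then have "c6 + D ^ Suc j \<le> (c6 + 1) * D ^ Suc j" using c6 by (simp add: algebra_simps mult_le_cancel_left1)
            then have "M * (c6 + D ^ Suc j) \<le> M * ((c6 + 1) * D ^ Suc j)" using Mpos by simp
            then show "M * (c6 + D ^ Suc j) \<le> D ^ (Suc j + 1)" by (simp add: D_def algebra_simps)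
          qed (use h0 in simp)
          finally show ?case .
        qed
        have TC0: "TC \<noteq> 0" using dTC dPn by auto
        then have q0: "q \<noteq> 0" using TCq by auto
        have "degree TC = degree [:u, 1:] + degree q" unfolding TCq by (rule degree_mult_eq) (use q0 in auto)
        then have dq: "degree q = n" using dTC dPn by simp
        have "lead_coeff TC = lead_coeff [:u, 1:] * lead_coeff q" unfolding TCq by (rule lead_coeff_mult)
        then have lq: "lead_coeff q = 1" using lTC lPC by simp
        have "norm (x - \<beta>) \<le> c7 * h" if "\<beta> \<in># R'" for \<beta>
        proof -
          have "poly q (\<beta> - x) = 0" unfolding q_def poly_prod_mset prod_mset_zero_iff using that by force
          then have "norm (\<beta> - x) \<le> max h (real (degree q) * D ^ (n + 1) * h / 1)"
          proof (rule cauchy_root_bound)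
            show "\<forall>k<degree q. norm (coeff q k) \<le> D ^ (n + 1) * h ^ (degree q - k)"
            proof (intro allI impI)
              fix k assume "k < degree q"
              then have "norm (coeff q k) \<le> D ^ (k + 1) * h ^ (n - k)" using qrec dq by simp
              also have "D ^ (k + 1) \<le> D ^ (n + 1)" using D1 \<open>k < degree q\<close> dq by (intro power_increasing) auto
              then have "D ^ (k + 1) * h ^ (n - k) \<le> D ^ (n + 1) * h ^ (n - k)" using h0 by (simp add: mult_right_mono)
              finally show "norm (coeff q k) \<le> D ^ (n + 1) * h ^ (degree q - k)" using dq by simp
            qed
          qed (use h0 lq in auto)
          also have "\<dots> \<le> E3 * h" unfolding E3_def dq using h0 by (auto simp: max_mult_distrib_right)
          also have "\<dots> \<le> c7 * h" using E3c h0 by (simp add: mult_right_mono)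
          finally show ?thesis by (simp add: norm_minus_commute)
        qed
        moreover have "R' \<subseteq># R" using RR' by simp
        moreover have "size R' = n" using RR' sR dPn by simp
        ultimately show ?thesis by blast
      qed
    qed
    then show "\<exists>A :: complex multiset. size A = n \<and> A \<subseteq># proots (map_poly (of_int :: int \<Rightarrow> complex) P) \<and>
            (\<forall>\<alpha>\<in>#A. cmod (complex_of_real \<xi> - \<alpha>) \<le> c7 * height P powr (- \<delta>))"
      unfolding R_def PC_def x_def h_def H_def .
  qed
qed


theorem proposition3:
  fixes \<xi> :: real and n :: nat and \<delta> :: real and \<P> :: "int poly set"
  assumes "n \<ge> 1" and "\<delta> > 0"
    and "\<forall>P\<in>\<P>. degree P = n \<or> (degree P = n + 1 \<and> lead_coeff P = 1)"
  shows "(\<exists>c6>0. \<forall>P\<in>\<P>. \<forall>k\<le>n.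
            \<bar>div_deriv (map_poly real_of_int P) k \<xi>\<bar> \<le> c6 * height P powr (1 - real (n - k) * \<delta>))
     \<longleftrightarrow>
     (\<exists>c7>0. \<forall>P\<in>\<P>. \<exists>A :: complex multiset.
            size A = n \<and> A \<subseteq># proots (map_poly (of_int :: int \<Rightarrow> complex) P) \<and>
            (\<forall>\<alpha>\<in>#A. cmod (complex_of_real \<xi> - \<alpha>) \<le> c7 * height P powr (- \<delta>)))"
proof
  assume "\<exists>c6>0. \<forall>P\<in>\<P>. \<forall>k\<le>n.
            \<bar>div_deriv (map_poly real_of_int P) k \<xi>\<bar> \<le> c6 * height P powr (1 - real (n - k) * \<delta>)"
  then obtain c6 where c6: "c6 > 0" and Hy: "\<forall>P\<in>\<P>. \<forall>k\<le>n.
            \<bar>div_deriv (map_poly real_of_int P) k \<xi>\<bar> \<le> c6 * height P powr (1 - real (n - k) * \<delta>)"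
    by blast
  obtain c7 where c7: "c7 > 0" and C: "\<forall>P::int poly. (degree P = n \<or> (degree P = n + 1 \<and> lead_coeff P = 1)) \<longrightarrow>
     (\<forall>k\<le>n. \<bar>div_deriv (map_poly real_of_int P) k \<xi>\<bar> \<le> c6 * height P powr (1 - real (n - k) * \<delta>)) \<longrightarrow>
     (\<exists>A :: complex multiset. size A = n \<and> A \<subseteq># proots (map_poly (of_int :: int \<Rightarrow> complex) P) \<and>
            (\<forall>\<alpha>\<in>#A. cmod (complex_of_real \<xi> - \<alpha>) \<le> c7 * height P powr (- \<delta>)))"
    using dir1[OF assms(1,2) c6, of \<xi>] by blast
  show "\<exists>c7>0. \<forall>P\<in>\<P>. \<exists>A :: complex multiset.
            size A = n \<and> A \<subseteq># proots (map_poly (of_int :: int \<Rightarrow> complex) P) \<and>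
            (\<forall>\<alpha>\<in>#A. cmod (complex_of_real \<xi> - \<alpha>) \<le> c7 * height P powr (- \<delta>))"
    using c7 C Hy assms(3) by blast
next
  assume "\<exists>c7>0. \<forall>P\<in>\<P>. \<exists>A :: complex multiset.
            size A = n \<and> A \<subseteq># proots (map_poly (of_int :: int \<Rightarrow> complex) P) \<and>
            (\<forall>\<alpha>\<in>#A. cmod (complex_of_real \<xi> - \<alpha>) \<le> c7 * height P powr (- \<delta>))"
  then obtain c7 where c7: "c7 > 0" and Hy: "\<forall>P\<in>\<P>. \<exists>A :: complex multiset.
            size A = n \<and> A \<subseteq># proots (map_poly (of_int :: int \<Rightarrow> complex) P) \<and>
            (\<forall>\<alpha>\<in>#A. cmod (complex_of_real \<xi> - \<alpha>) \<le> c7 * height P powr (- \<delta>))"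
    by blast
  obtain c6 where c6: "c6 > 0" and C: "\<forall>P::int poly. (degree P = n \<or> (degree P = n + 1 \<and> lead_coeff P = 1)) \<longrightarrow>
     (\<exists>A :: complex multiset. size A = n \<and> A \<subseteq># proots (map_poly (of_int :: int \<Rightarrow> complex) P) \<and>
            (\<forall>\<alpha>\<in>#A. cmod (complex_of_real \<xi> - \<alpha>) \<le> c7 * height P powr (- \<delta>))) \<longrightarrow>
     (\<forall>k\<le>n. \<bar>div_deriv (map_poly real_of_int P) k \<xi>\<bar> \<le> c6 * height P powr (1 - real (n - k) * \<delta>))"
    using dir2[OF assms(1,2) c7, of \<xi>] by blast
  show "\<exists>c6>0. \<forall>P\<in>\<P>. \<forall>k\<le>n.
            \<bar>div_deriv (map_poly real_of_int P) k \<xi>\<bar> \<le> c6 * height P powr (1 - real (n - k) * \<delta>)"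
    using c6 C Hy assms(3) by blast
qed

end
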